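(* Let $\nu>-1$ be real. Then $J_\nu(\cdot;q^2)$ has countably infinitely many positive zeros, and each of them is simple.
   Context: Fix $0<q<1$. For $a\in\mathbb C$ put $(a;q)_0=1$, $(a;q)_k=\prod_{i=0}^{k-1}(1-aq^i)$, $(a;q)_\infty=\prod_{i\ge0}(1-aq^i)$. For $\nu\in\mathbb C$ and $x\in\mathbb C\setminus\{0\}$ the Hahn–Exton $q$-Bessel function is $$J_\nu(x;q^2)=\frac{x^\nu}{(q^2;q^2)_\infty}\sum_{k=0}^\infty\frac{(-1)^kq^{k(k+1)}(q^{2\nu+2k+2};q^2)_\infty}{(q^2;q^2)_k}\,x^{2k},$$ with $x^\nu=\exp(\nu\operatorname{Log}x)$ (principal branch). A zero $a$ is simple if $J_\nu'(a;q^2)\ne0$ (ordinary derivative in $x$). *)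

theory Defs
  imports "HOL-Analysis.Analysis"
begin

definition qpoch :: "complex \<Rightarrow> real \<Rightarrow> nat \<Rightarrow> complex" where
  "qpoch a q k = (\<Prod>i<k. 1 - a * of_real (q ^ i))"

definition qpoch_inf :: "complex \<Rightarrow> real \<Rightarrow> complex" where
  "qpoch_inf a q = (\<Prod>i. 1 - a * of_real (q ^ i))"

text \<open>Hahn--Exton q-Bessel function J_nu(x;q^2), with x^nu = exp(nu Log x) (principal branch).\<close>
definition hahn_exton_J :: "real \<Rightarrow> complex \<Rightarrow> complex \<Rightarrow> complex" where
  "hahn_exton_J q \<nu> x =
     x powr \<nu> / qpoch_inf (of_real (q^2)) (q^2) *
     (\<Sum>k. (-1) ^ k * of_real (q ^ (k * (k + 1))) *
            qpoch_inf (of_real q powr (2 * \<nu> + 2 * of_nat k + 2)) (q^2) /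
            qpoch (of_real (q^2)) (q^2) k * x ^ (2 * k))"

end

theory Submission
  imports Defs
begin

definition Pr :: "real \<Rightarrow> real \<Rightarrow> real" where
  "Pr r b = (\<Prod>i. 1 - b * r ^ i)"

lemma Pr_conv:
  fixes r b :: real
  assumes "0 < r" "r < 1" "0 \<le> b" "b < 1"
  shows "convergent_prod (\<lambda>i. 1 - b * r ^ i)"
proof -
  have "summable (\<lambda>i. norm ((1 - b * r ^ i) - 1))"
    using assms by (simp add: abs_mult summable_mult)
  then show ?thesis
    by (intro abs_convergent_prod_imp_convergent_prod summable_imp_abs_convergent_prod)
qed

lemma Pr_factor_pos:
  fixes r b :: real
  assumes "0 < r" "r < 1" "0 \<le> b" "b < 1"
  shows "0 < 1 - b * r ^ i"
proof -
  have "r ^ i \<le> 1" using assms by (simp add: power_le_one_iff)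
  hence "b * r ^ i \<le> b" using assms by (simp add: mult_left_le)
  thus ?thesis using assms by linarith
qed

lemma Pr_nonzero:
  assumes "0 < r" "r < 1" "0 \<le> b" "b < 1"
  shows "Pr r b \<noteq> 0"
  unfolding Pr_def
  using Pr_conv[OF assms] Pr_factor_pos[OF assms]
  by (intro prodinf_nonzero) (auto simp: less_le)

lemma Pr_shift:
  assumes "0 < r" "r < 1" "0 \<le> b" "b < 1"
  shows "Pr r b = (1 - b) * Pr r (b * r)"
proof -
  have b1: "0 \<le> b * r" "b * r < 1"
    using assms by (auto) (smt (verit) mult_left_le)
  have "(\<lambda>i. 1 - (b * r) * r ^ i) has_prod Pr r (b * r)"
    unfolding Pr_def using Pr_conv[OF assms(1,2) b1] by auto
  hence "(\<lambda>i. 1 - b * r ^ Suc i) has_prod Pr r (b * r)"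
    by (simp add: mult_ac)
  hence "(\<lambda>i. 1 - b * r ^ i) has_prod (Pr r (b * r) * (1 - b))"
    using has_prod_Suc_iff[of "\<lambda>i. 1 - b * r ^ i"] assms by simp
  thus ?thesis unfolding Pr_def
    by (metis has_prod_unique mult.commute)
qed

lemma Pr_complex:
  assumes "0 < r" "r < 1" "0 \<le> b" "b < 1"
  shows "qpoch_inf (complex_of_real b) r = complex_of_real (Pr r b)"
proof -
  have "(\<lambda>i. 1 - b * r ^ i) has_prod Pr r b"
    unfolding Pr_def using Pr_conv[OF assms] by auto
  hence "(\<lambda>i. complex_of_real (1 - b * r ^ i)) has_prod complex_of_real (Pr r b)"
    by (simp only: has_prod_of_real_iff)
  hence "(\<lambda>i. 1 - complex_of_real b * complex_of_real (r ^ i)) has_prod complex_of_real (Pr r b)"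
    by (simp only: of_real_diff of_real_mult of_real_1)
  thus ?thesis unfolding qpoch_inf_def by (metis has_prod_unique)
qed


definition cr :: "real \<Rightarrow> real \<Rightarrow> nat \<Rightarrow> real" where
  "cr q \<nu> k = (-1) ^ k * q ^ (k * (k + 1)) * Pr (q^2) (q powr (2 * \<nu> + 2 * real k + 2))
     / (\<Prod>i<k. 1 - q^2 * (q^2) ^ i)"

definition Gr :: "real \<Rightarrow> real \<Rightarrow> real \<Rightarrow> real" where
  "Gr q \<nu> w = (\<Sum>k. cr q \<nu> k * w ^ k)"

definition Gd :: "real \<Rightarrow> real \<Rightarrow> real \<Rightarrow> real" where
  "Gd q \<nu> w = (\<Sum>k. diffs (cr q \<nu>) k * w ^ k)"

lemma wr_aux:
  fixes y0 y1 y2 d0 d1 d2 t s c :: real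
  assumes "y0 - (1+t)*y1 + t*y2 + c*y1 = 0" "d0 - (1+t)*d1 + t*d2 + s*y1 + c*d1 = 0"
  shows "(y0*d1 - y1*d0) - t*(y1*d2 - y2*d1) = s*y1^2"
proof -
  have "(y0*d1 - y1*d0) - t*(y1*d2 - y2*d1) - s*y1^2
      = d1 * (y0 - (1+t)*y1 + t*y2 + c*y1) - y1 * (d0 - (1+t)*d1 + t*d2 + s*y1 + c*d1)"
    by algebra
  thus ?thesis using assms by simp
qed

lemma powr_lt1:
  fixes q e :: real
  assumes "0 < q" "q < 1" "0 < e"
  shows "q powr e < 1"
proof -
  have "ln q < 0" using assms by simp
  hence "e * ln q < 0" using assms by (simp add: mult_pos_neg)
  thus ?thesis using assms by (simp add: powr_def)
qed

context
  fixes q \<nu> :: real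
  assumes q0: "0 < q" and q1: "q < 1" and nu: "\<nu> > -1"
begin

lemma r_props: "0 < q^2" "q^2 < 1"
  using q0 q1 by (auto simp: power_less_one_iff)

lemma bk: "q powr (2 * \<nu> + 2 * real k + 2) = q powr (2 * \<nu>) * (q^2) ^ Suc k"
proof -
  have "q powr (2 * \<nu> + 2 * real k + 2) = q powr (2 * \<nu>) * q powr (real (2 * Suc k))"
    by (simp add: powr_add[symmetric] algebra_simps)
  also have "q powr (real (2 * Suc k)) = (q^2) ^ Suc k"
    by (subst powr_realpow[OF q0]) (rule power_mult)
  finally show ?thesis .
qed

lemma tr_lt1: "q powr (2 * \<nu>) * q^2 < 1"
proof -
  have "q powr (2 * \<nu>) * q^2 = q powr (2 * \<nu> + 2)"
    using q0 by (simp add: powr_add powr_realpow[of q 2, simplified])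
  also have "\<dots> < 1" using q0 q1 nu by (intro powr_lt1) auto
  finally show ?thesis .
qed

lemma tpos: "0 < q powr (2 * \<nu>)"
  using q0 by simp

lemma b_props: "0 \<le> q powr (2 * \<nu>) * (q^2) ^ Suc k" "q powr (2 * \<nu>) * (q^2) ^ Suc k < 1"
proof -
  show "0 \<le> q powr (2 * \<nu>) * (q^2) ^ Suc k" using tpos q0 by simp
  have "(q^2) ^ k \<le> 1" using r_props by (simp add: power_le_one)
  hence "q powr (2 * \<nu>) * q^2 * (q^2) ^ k \<le> q powr (2 * \<nu>) * q^2"
    using tpos q0 by (simp add: mult_left_le)
  thus "q powr (2 * \<nu>) * (q^2) ^ Suc k < 1" using tr_lt1 by (simp add: mult_ac)
qed

lemma r_pow_lt1: "(q^2) ^ Suc k < 1"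
  using r_props by (intro power_Suc_less_one) auto

lemma cr_Suc_aux:
  fixes A E R P1 Q B :: real
  assumes "B \<noteq> 1" "Q \<noteq> 0" "R \<noteq> 1"
  shows "- A * (E * R) * P1 / (Q * (1 - R)) = - (A * E * ((1 - B) * P1) / Q) * R / ((1 - R) * (1 - B))"
proof -
  have "1 - B \<noteq> 0" "1 - R \<noteq> 0" using assms by auto
  thus ?thesis using assms(2) by (simp add: divide_simps)
qed

lemma Q_nz: "(\<Prod>i<k. 1 - q^2 * (q^2) ^ i) \<noteq> 0"
proof -
  have "\<And>i. q^2 * (q^2) ^ i < 1" using r_pow_lt1 by simp
  thus ?thesis by (simp add: prod_zero_iff) (smt (verit))
qed

lemma cr_Suc:
  "cr q \<nu> (Suc k) = - cr q \<nu> k * (q^2) ^ Suc k /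
      ((1 - (q^2) ^ Suc k) * (1 - q powr (2 * \<nu>) * (q^2) ^ Suc k))"
proof -
  let ?t = "q powr (2 * \<nu>)" and ?r = "q^2"
  have sh: "Pr ?r (?t * ?r ^ Suc k) = (1 - ?t * ?r ^ Suc k) * Pr ?r (?t * ?r ^ Suc (Suc k))"
    using Pr_shift[OF r_props b_props(1)[of k] b_props(2)[of k]] by (simp add: mult_ac)
  have nz: "?t * ?r ^ Suc k \<noteq> 1" using b_props(2)[of k] by simp
  have nz2: "?r ^ Suc k \<noteq> 1" using r_pow_lt1[of k] by simp
  have ee: "Suc k * (Suc k + 1) = k * (k+1) + 2 * Suc k" by simp
  have e1: "q ^ (Suc k * (Suc k + 1)) = q ^ (k * (k+1)) * ?r ^ Suc k"
    by (simp only: ee power_add power_mult)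
  have c1: "cr q \<nu> (Suc k) = - ((-1) ^ k) * (q ^ (k * (k+1)) * ?r ^ Suc k) * Pr ?r (?t * ?r ^ Suc (Suc k))
      / ((\<Prod>i<k. 1 - ?r * ?r ^ i) * (1 - ?r ^ Suc k))"
    unfolding cr_def bk[of "Suc k"] e1 prod.lessThan_Suc by simp
  have c0: "cr q \<nu> k = (-1) ^ k * q ^ (k * (k+1)) * ((1 - ?t * ?r ^ Suc k) * Pr ?r (?t * ?r ^ Suc (Suc k)))
      / (\<Prod>i<k. 1 - ?r * ?r ^ i)"
    unfolding cr_def bk[of k] sh ..
  show ?thesis unfolding c1 c0
    by (rule cr_Suc_aux[OF nz Q_nz nz2])
qed

lemma D_pos: "0 < (1 - q^2) * (1 - q powr (2 * \<nu>) * q^2)"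
  using r_props tr_lt1 by simp

lemma cr_bound:
  "\<bar>cr q \<nu> (Suc k)\<bar> \<le> (q^2) ^ Suc k / ((1 - q^2) * (1 - q powr (2 * \<nu>) * q^2)) * \<bar>cr q \<nu> k\<bar>"
proof -
  let ?t = "q powr (2 * \<nu>)" and ?r = "q^2"
  have R1: "?r ^ Suc k \<le> ?r" using r_props by (simp add: power_le_one mult_left_le)
  have R2: "?t * ?r ^ Suc k \<le> ?t * ?r" using R1 tpos by simp
  have d1: "1 - ?r \<le> 1 - ?r ^ Suc k" using R1 by simp
  have d2: "1 - ?t * ?r \<le> 1 - ?t * ?r ^ Suc k" using R2 by simp
  have p1: "0 < 1 - ?r" "0 < 1 - ?t * ?r" using r_props tr_lt1 by auto
  have dle: "(1 - ?r) * (1 - ?t * ?r) \<le> (1 - ?r ^ Suc k) * (1 - ?t * ?r ^ Suc k)"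
    using d1 d2 p1 by (intro mult_mono) auto
  have "\<bar>cr q \<nu> (Suc k)\<bar> = \<bar>cr q \<nu> k\<bar> * ?r ^ Suc k / ((1 - ?r ^ Suc k) * (1 - ?t * ?r ^ Suc k))"
    unfolding cr_Suc using d1 d2 p1 by (simp add: abs_mult)
  also have "\<dots> \<le> \<bar>cr q \<nu> k\<bar> * ?r ^ Suc k / ((1 - ?r) * (1 - ?t * ?r))"
    using dle D_pos r_props by (intro divide_left_mono) auto
  finally show ?thesis by (simp add: mult_ac)
qed

lemma cr_summable:
  fixes w :: "'a::{real_normed_field,banach}"
  shows "summable (\<lambda>k. of_real (cr q \<nu> k) * w ^ k)"
proof -
  define D where "D = (1 - q^2) * (1 - q powr (2 * \<nu>) * q^2)"
  have D0: "D > 0" unfolding D_def by (rule D_pos)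
  have "0 < 2 * (norm w + 1)" using norm_ge_zero[of w] by (smt (verit))
  hence "0 < D / (2 * (norm w + 1))" using D0 by (rule divide_pos_pos[rotated])
  then obtain N where N: "(q^2) ^ N < D / (2 * (norm w + 1))"
    using real_arch_pow_inv[of "D / (2 * (norm w + 1))" "q^2"] r_props by blast
  show ?thesis
  proof (rule summable_ratio_test[of "1/2" N])
    fix n assume n: "N \<le> n"
    have rn: "(q^2) ^ Suc n \<le> (q^2) ^ N"
      using n r_props by (intro power_decreasing) auto
    have rw: "(q^2) ^ Suc n * norm w \<le> D / 2"
    proof -
      have "(q^2) ^ Suc n * norm w \<le> (q^2) ^ N * (norm w + 1)"
        using rn r_props by (intro mult_mono) auto
      also have "\<dots> \<le> D / 2"
        using N by (simp add: field_simps add_pos_nonneg)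
      finally show ?thesis .
    qed
    have "norm (of_real (cr q \<nu> (Suc n)) * w ^ Suc n :: 'a) = \<bar>cr q \<nu> (Suc n)\<bar> * (norm w * norm w ^ n)"
      by (simp add: norm_mult norm_power)
    also have "\<dots> \<le> ((q^2) ^ Suc n / D * \<bar>cr q \<nu> n\<bar>) * (norm w * norm w ^ n)"
      using cr_bound[of n] unfolding D_def by (intro mult_right_mono) auto
    also have "\<dots> = ((q^2) ^ Suc n * norm w) / D * (\<bar>cr q \<nu> n\<bar> * norm w ^ n)"
      by simp
    also have "\<dots> \<le> (D / 2) / D * (\<bar>cr q \<nu> n\<bar> * norm w ^ n)"
      using rw D0 by (intro mult_right_mono divide_right_mono) auto
    also have "\<dots> = 1/2 * norm (of_real (cr q \<nu> n) * w ^ n :: 'a)"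
      using D0 by (simp add: norm_mult norm_power)
    finally show "norm (of_real (cr q \<nu> (Suc n)) * w ^ Suc n :: 'a) \<le> 1/2 * norm (of_real (cr q \<nu> n) * w ^ n :: 'a)" .
  qed simp
qed

lemma cr_Suc':
  "cr q \<nu> (Suc k) * ((1 - (q^2) ^ Suc k) * (1 - q powr (2 * \<nu>) * (q^2) ^ Suc k)) = - cr q \<nu> k * (q^2) ^ Suc k"
proof -
  have "(1 - (q^2) ^ Suc k) * (1 - q powr (2 * \<nu>) * (q^2) ^ Suc k) \<noteq> 0"
    using r_pow_lt1[of k] b_props(2)[of k] by simp
  thus ?thesis unfolding cr_Suc by simp
qed

lemma cr0_nz: "cr q \<nu> 0 \<noteq> 0"
proof -
  have "Pr (q^2) (q powr (2 * \<nu>) * (q^2) ^ Suc 0) \<noteq> 0"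
    using Pr_nonzero[OF r_props b_props(1)[of 0] b_props(2)[of 0]] .
  thus ?thesis unfolding cr_def bk[of 0] by simp
qed

lemma FE:
  fixes w :: real
  defines "G \<equiv> \<lambda>w::real. \<Sum>k. cr q \<nu> k * w ^ k"
  shows "G w - (1 + q powr (2 * \<nu>)) * G (q^2 * w) + q powr (2 * \<nu>) * G (q^2 * (q^2 * w))
          + q^2 * w * G (q^2 * w) = 0"
proof -
  let ?t = "q powr (2 * \<nu>)" and ?r = "q^2"
  have sm: "\<And>x::real. summable (\<lambda>k. cr q \<nu> k * x ^ k)"
    using cr_summable[where 'a=real] by simp
  define a where "a k = cr q \<nu> k * w ^ k - (1 + ?t) * (cr q \<nu> k * (?r * w) ^ k)
      + ?t * (cr q \<nu> k * (?r * (?r * w)) ^ k)" for k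
  have aS: "a sums (G w - (1 + ?t) * G (?r * w) + ?t * G (?r * (?r * w)))"
    unfolding a_def G_def
    by (intro sums_add sums_diff sums_mult summable_sums sm)
  have a0: "a 0 = 0" unfolding a_def by (simp add: algebra_simps)
  have aSuc: "a (Suc k) = - (?r * w * (cr q \<nu> k * (?r * w) ^ k))" for k
  proof -
    have "a (Suc k) = cr q \<nu> (Suc k) * ((1 - ?r ^ Suc k) * (1 - ?t * ?r ^ Suc k)) * w ^ Suc k"
      unfolding a_def power_mult_distrib by (simp add: algebra_simps)
    also have "\<dots> = - cr q \<nu> k * ?r ^ Suc k * w ^ Suc k" by (simp only: cr_Suc')
    also have "\<dots> = - (?r * w * (cr q \<nu> k * (?r * w) ^ k))"
      by (simp add: power_mult_distrib algebra_simps)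
    finally show ?thesis .
  qed
  have "(\<lambda>k. a (Suc k)) sums (- (?r * w * G (?r * w)))"
    unfolding aSuc G_def by (intro sums_minus sums_mult summable_sums sm)
  hence "a sums (- (?r * w * G (?r * w)))"
    using sums_Suc_iff[of a] a0 by simp
  with aS have "G w - (1 + ?t) * G (?r * w) + ?t * G (?r * (?r * w)) = - (?r * w * G (?r * w))"
    using sums_unique2 by blast
  thus ?thesis by simp
qed

lemma Gr_summable: "summable (\<lambda>k. cr q \<nu> k * x ^ k)"
  using cr_summable[where 'a=real, of x] by simp

lemma Gr_deriv: "(Gr q \<nu> has_real_derivative Gd q \<nu> x) (at x)"
  unfolding Gr_def[abs_def] Gd_def
  by (rule termdiffs_strong_converges_everywhere[OF Gr_summable])

lemma Gr_cont: "isCont (Gr q \<nu>) x"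
  unfolding Gr_def[abs_def]
  by (rule isCont_powser_converges_everywhere[OF Gr_summable])

lemma Gd_cont: "isCont (Gd q \<nu>) x"
  unfolding Gd_def[abs_def]
  by (rule isCont_powser_converges_everywhere[OF termdiff_converges_all[OF Gr_summable]])

lemma Gr0: "Gr q \<nu> 0 \<noteq> 0"
  unfolding Gr_def using cr0_nz by simp

lemma FE_Gr:
  "Gr q \<nu> w - (1 + q powr (2 * \<nu>)) * Gr q \<nu> (q^2 * w) + q powr (2 * \<nu>) * Gr q \<nu> (q^2 * (q^2 * w))
          + q^2 * w * Gr q \<nu> (q^2 * w) = 0"
  using FE[of w] unfolding Gr_def by simp

lemma FE_Gd:
  "Gd q \<nu> w - (1 + q powr (2 * \<nu>)) * (Gd q \<nu> (q^2 * w) * q^2)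
     + q powr (2 * \<nu>) * (Gd q \<nu> (q^2 * (q^2 * w)) * (q^2 * q^2))
     + (q^2 * Gr q \<nu> (q^2 * w) + q^2 * w * (Gd q \<nu> (q^2 * w) * q^2)) = 0"
proof -
  let ?t = "q powr (2 * \<nu>)" and ?r = "q^2"
  let ?F = "\<lambda>w. Gr q \<nu> w - (1 + ?t) * Gr q \<nu> (?r * w) + ?t * Gr q \<nu> (?r * (?r * w))
          + ?r * w * Gr q \<nu> (?r * w)"
  have d1: "((\<lambda>w. Gr q \<nu> (?r * w)) has_real_derivative Gd q \<nu> (?r * w) * ?r) (at w)" for w
    by (rule DERIV_chain2[OF Gr_deriv]) (auto intro!: derivative_eq_intros)
  have d2: "((\<lambda>w. Gr q \<nu> (?r * (?r * w))) has_real_derivative Gd q \<nu> (?r * (?r * w)) * (?r * ?r)) (at w)" for w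
    by (rule DERIV_chain2[OF Gr_deriv]) (auto intro!: derivative_eq_intros)
  have d4: "((\<lambda>w. Gr q \<nu> (q ^ 4 * w)) has_real_derivative Gd q \<nu> (q ^ 4 * w) * q ^ 4) (at w)" for w
    by (rule DERIV_chain2[OF Gr_deriv]) (auto intro!: derivative_eq_intros)
  have "(?F has_real_derivative
     Gd q \<nu> w - (1 + ?t) * (Gd q \<nu> (?r * w) * ?r)
     + ?t * (Gd q \<nu> (?r * (?r * w)) * (?r * ?r))
     + (?r * Gr q \<nu> (?r * w) + ?r * w * (Gd q \<nu> (?r * w) * ?r))) (at w)"
    by (auto intro!: derivative_eq_intros d1 d2 d4 Gr_deriv)
  moreover have "?F = (\<lambda>w. 0)" using FE_Gr by (intro ext) simp
  ultimately have "((\<lambda>w. 0) has_real_derivative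
     Gd q \<nu> w - (1 + ?t) * (Gd q \<nu> (?r * w) * ?r)
     + ?t * (Gd q \<nu> (?r * (?r * w)) * (?r * ?r))
     + (?r * Gr q \<nu> (?r * w) + ?r * w * (Gd q \<nu> (?r * w) * ?r))) (at w)" by simp
  with DERIV_const show ?thesis using DERIV_unique by metis
qed

lemma simple_zero:
  assumes z: "Gr q \<nu> l = 0" and dz: "Gd q \<nu> l = 0"
  shows False
proof -
  define t where "t = q powr (2 * \<nu>)"
  define r where "r = q^2"
  have t0: "0 < t" unfolding t_def by (rule tpos)
  have r0: "0 < r" "r < 1" unfolding r_def using r_props by auto
  have tr: "t * r < 1" unfolding t_def r_def by (rule tr_lt1)
  define y where "y k = Gr q \<nu> (l * r ^ k)" for k
  define d where "d k = r ^ k * Gd q \<nu> (l * r ^ k)" for k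
  have e1: "r * (l * r ^ k) = l * r ^ Suc k" for k by simp
  have e2: "r * (r * (l * r ^ k)) = l * r ^ Suc (Suc k)" for k by simp
  have R: "y k - (1+t) * y (Suc k) + t * y (Suc (Suc k)) + (l * r ^ Suc k) * y (Suc k) = 0" for k
    using FE_Gr[of "l * r ^ k"] unfolding y_def t_def[symmetric] r_def[symmetric] e1 e2
    by (simp add: algebra_simps)
  have R': "d k - (1+t) * d (Suc k) + t * d (Suc (Suc k)) + r ^ Suc k * y (Suc k)
      + (l * r ^ Suc k) * d (Suc k) = 0" for k
  proof -
    have "r ^ k * (Gd q \<nu> (l * r ^ k) - (1 + t) * (Gd q \<nu> (l * r ^ Suc k) * r)
     + t * (Gd q \<nu> (l * r ^ Suc (Suc k)) * (r * r))
     + (r * Gr q \<nu> (l * r ^ Suc k) + r * (l * r ^ k) * (Gd q \<nu> (l * r ^ Suc k) * r))) = 0"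
      using FE_Gd[of "l * r ^ k"] unfolding t_def[symmetric] r_def[symmetric] e1 e2 by simp
    thus ?thesis unfolding d_def y_def by (simp add: algebra_simps)
  qed
  define U where "U k = y k * d (Suc k) - y (Suc k) * d k" for k
  have UR: "U k - t * U (Suc k) = r ^ Suc k * y (Suc k) ^ 2" for k
    unfolding U_def by (rule wr_aux[OF R R'])
  define V where "V n = t ^ n * U n" for n
  have VR: "V n - V (Suc n) = t ^ n * r ^ Suc n * y (Suc n) ^ 2" for n
  proof -
    have "V n - V (Suc n) = t ^ n * (U n - t * U (Suc n))" unfolding V_def by (simp add: algebra_simps)
    thus ?thesis using UR[of n] by simp
  qed
  have V0: "V 0 = 0" unfolding V_def U_def y_def d_def using z dz by simp
  have Vsum: "V n = - (\<Sum>k<n. t ^ k * r ^ Suc k * y (Suc k) ^ 2)" for n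
  proof (induction n)
    case 0 then show ?case using V0 by simp
  next
    case (Suc n) then show ?case using VR[of n] by simp
  qed
  have lr: "(\<lambda>n. l * r ^ n) \<longlonglongrightarrow> 0"
    using tendsto_mult[OF tendsto_const LIMSEQ_power_zero[of r]] r0 by simp
  have ylim: "y \<longlonglongrightarrow> Gr q \<nu> 0"
    unfolding y_def by (rule isCont_tendsto_compose[OF Gr_cont lr])
  have dlim: "(\<lambda>n. Gd q \<nu> (l * r ^ n)) \<longlonglongrightarrow> Gd q \<nu> 0"
    by (rule isCont_tendsto_compose[OF Gd_cont lr])
  obtain K where K: "y (Suc K) \<noteq> 0"
  proof (rule ccontr)
    assume "\<not> thesis"
    with that have "\<forall>K. y (Suc K) = 0" by blast
    hence "(\<lambda>n. y (Suc n)) = (\<lambda>n. 0)" by auto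
    moreover have "(\<lambda>n. y (Suc n)) \<longlonglongrightarrow> Gr q \<nu> 0" by (rule LIMSEQ_Suc[OF ylim])
    ultimately have "Gr q \<nu> 0 = 0" using LIMSEQ_unique[OF tendsto_const] by metis
    thus False using Gr0 by simp
  qed
  define \<epsilon> where "\<epsilon> = t ^ K * r ^ Suc K * y (Suc K) ^ 2"
  have eps: "0 < \<epsilon>" unfolding \<epsilon>_def using K t0 r0 by simp
  have Vle: "V n \<le> - \<epsilon>" if "Suc K \<le> n" for n
  proof -
    have "\<epsilon> \<le> (\<Sum>k<n. t ^ k * r ^ Suc k * y (Suc k) ^ 2)"
      unfolding \<epsilon>_def using that t0 r0
      by (intro member_le_sum[where f="\<lambda>k. t ^ k * r ^ Suc k * y (Suc k) ^ 2"]) auto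
    thus ?thesis using Vsum[of n] by simp
  qed
  have Vform: "V n = (t * r) ^ n * (y n * (r * Gd q \<nu> (l * r ^ Suc n)) - y (Suc n) * Gd q \<nu> (l * r ^ n))" for n
    unfolding V_def U_def d_def by (simp add: power_mult_distrib algebra_simps)
  have "V \<longlonglongrightarrow> 0 * (Gr q \<nu> 0 * (r * Gd q \<nu> 0) - Gr q \<nu> 0 * Gd q \<nu> 0)"
    unfolding Vform
    by (intro tendsto_mult tendsto_diff LIMSEQ_power_zero ylim LIMSEQ_Suc[OF ylim] tendsto_const
        LIMSEQ_Suc[OF dlim] dlim) (use tr t0 r0 in simp)
  hence "V \<longlonglongrightarrow> 0" by simp
  hence "eventually (\<lambda>n. - \<epsilon> < V n) sequentially"
    using eps by (intro order_tendstoD(1)) auto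
  then obtain N where N: "\<And>n. n \<ge> N \<Longrightarrow> - \<epsilon> < V n"
    unfolding eventually_sequentially by blast
  have "- \<epsilon> < V (max N (Suc K))" by (rule N) simp
  moreover have "V (max N (Suc K)) \<le> - \<epsilon>" by (rule Vle) simp
  ultimately show False by simp
qed

lemma zero_between:
  assumes "a \<le> b" "Gr q \<nu> a * Gr q \<nu> b \<le> 0"
  shows "\<exists>x. a \<le> x \<and> x \<le> b \<and> Gr q \<nu> x = 0"
proof -
  have c: "continuous_on {a..b} (Gr q \<nu>)"
    by (intro continuous_at_imp_continuous_on ballI Gr_cont)
  show ?thesis
  proof (cases "Gr q \<nu> a \<le> 0")
    case True
    have "0 \<le> Gr q \<nu> b \<or> Gr q \<nu> a = 0"
    proof (rule ccontr)
      assume "\<not> (0 \<le> Gr q \<nu> b \<or> Gr q \<nu> a = 0)"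
      hence "Gr q \<nu> a < 0" "Gr q \<nu> b < 0" using True by auto
      hence "0 < Gr q \<nu> a * Gr q \<nu> b" by (rule mult_neg_neg)
      thus False using assms(2) by simp
    qed
    thus ?thesis
    proof
      assume "0 \<le> Gr q \<nu> b" thus ?thesis using IVT'[OF True _ assms(1) c] by blast
    next
      assume "Gr q \<nu> a = 0" thus ?thesis using assms(1) by blast
    qed
  next
    case False
    have "Gr q \<nu> b \<le> 0"
    proof (rule ccontr)
      assume "\<not> Gr q \<nu> b \<le> 0"
      hence "0 < Gr q \<nu> a * Gr q \<nu> b" using False by (intro mult_pos_pos) auto
      thus False using assms(2) by simp
    qed
    thus ?thesis using IVT2'[OF _ _ assms(1) c] False by force
  qed
qed

lemma zeros_unbounded: "\<exists>w > Z. Gr q \<nu> w = 0"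
proof (rule ccontr)
  assume H: "\<not> (\<exists>w > Z. Gr q \<nu> w = 0)"
  define t where "t = q powr (2 * \<nu>)"
  define r where "r = q^2"
  have t0: "0 < t" unfolding t_def by (rule tpos)
  have r0: "0 < r" "r < 1" unfolding r_def using r_props by auto
  define A where "A = max Z (1 + t) + 1"
  define B where "B = A / r"
  define w where "w = B / r"
  have A0: "A > Z" "A > 1 + t" "A > 0" unfolding A_def using t0 by auto
  have AB: "A < B" unfolding B_def using A0 r0 by (simp add: field_simps)
  have Bw: "B < w" unfolding w_def using A0 AB r0 by (simp add: field_simps)
  have rw: "r * w = B" "r * B = A" unfolding w_def B_def using r0 by auto
  have fe: "Gr q \<nu> w - (1 + t) * Gr q \<nu> B + t * Gr q \<nu> A + B * Gr q \<nu> B = 0"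
    using FE_Gr[of w] unfolding t_def[symmetric] r_def[symmetric] rw .
  show False
  proof (cases "Gr q \<nu> A * Gr q \<nu> B \<le> 0")
    case True
    then obtain x where "A \<le> x" "Gr q \<nu> x = 0" using zero_between[of A B] AB by auto
    thus False using H A0 by force
  next
    case False
    have "Gr q \<nu> B * Gr q \<nu> w = (1 + t - B) * (Gr q \<nu> B)^2 - t * (Gr q \<nu> A * Gr q \<nu> B)"
    proof -
      have gw: "Gr q \<nu> w = (1 + t - B) * Gr q \<nu> B - t * Gr q \<nu> A"
        using fe by (simp add: algebra_simps)
      show ?thesis unfolding gw by (simp add: algebra_simps power2_eq_square)
    qed
    also have "\<dots> \<le> 0"
    proof -
      have "(1 + t - B) * (Gr q \<nu> B)^2 \<le> 0" using AB A0 by (intro mult_nonpos_nonneg) auto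
      moreover have "0 \<le> t * (Gr q \<nu> A * Gr q \<nu> B)" using False t0 by simp
      ultimately show ?thesis by simp
    qed
    finally obtain x where "B \<le> x" "Gr q \<nu> x = 0" using zero_between[of B w] Bw by auto
    thus False using H A0 AB by force
  qed
qed

lemma Gr_zeros_countable: "countable {w. Gr q \<nu> w = 0}"
proof -
  let ?Z = "{w. Gr q \<nu> w = 0}"
  have cl: "closed ?Z"
    by (rule closed_Collect_eq) (auto intro!: continuous_at_imp_continuous_on Gr_cont)
  have nl: "\<not> y islimpt ?Z" for y
  proof
    assume l: "y islimpt ?Z"
    hence yz: "Gr q \<nu> y = 0" using cl closed_limpt by blast
    have dn: "Gd q \<nu> y \<noteq> 0" using simple_zero yz by blast
    define f where "f x = Gr q \<nu> x * Gd q \<nu> y" for x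
    have df: "(f has_real_derivative Gd q \<nu> y * Gd q \<nu> y) (at y)"
      unfolding f_def[abs_def] by (auto intro!: derivative_eq_intros Gr_deriv)
    have pos: "0 < Gd q \<nu> y * Gd q \<nu> y" using dn not_real_square_gt_zero by blast
    obtain d1 where d1: "d1 > 0" "\<And>h. h > 0 \<Longrightarrow> h < d1 \<Longrightarrow> f y < f (y + h)"
      using DERIV_pos_inc_right[OF df pos] by blast
    obtain d2 where d2: "d2 > 0" "\<And>h. h > 0 \<Longrightarrow> h < d2 \<Longrightarrow> f (y - h) < f y"
      using DERIV_pos_inc_left[OF df pos] by blast
    have fy: "f y = 0" unfolding f_def using yz by simp
    obtain x where x: "x \<in> ?Z" "x \<noteq> y" "\<bar>x - y\<bar> < min d1 d2"
      using l d1(1) d2(1) unfolding islimpt_approachable_real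
      by (metis (no_types, lifting) min_less_iff_conj)
    have fx: "f x = 0" unfolding f_def using x(1) by simp
    show False
    proof (cases "x > y")
      case True
      thus False using d1(2)[of "x - y"] x fy fx by simp
    next
      case False
      hence "x < y" using x(2) by simp
      thus False using d2(2)[of "y - x"] x fy fx by simp
    qed
  qed
  have "?Z sparse_in UNIV" using sparse_in_open[of UNIV ?Z] nl by auto
  from sparse_imp_countable[OF open_UNIV this] show ?thesis by simp
qed

lemma coeff_complex:
  "(-1) ^ k * complex_of_real (q ^ (k * (k + 1))) *
     qpoch_inf (complex_of_real q powr (2 * complex_of_real \<nu> + 2 * of_nat k + 2)) (q^2) /
     qpoch (complex_of_real (q^2)) (q^2) k = complex_of_real (cr q \<nu> k)"
proof -
  have ex: "2 * complex_of_real \<nu> + 2 * of_nat k + 2 = complex_of_real (2 * \<nu> + 2 * real k + 2)"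
    by simp
  have pw: "complex_of_real q powr (2 * complex_of_real \<nu> + 2 * of_nat k + 2)
      = complex_of_real (q powr (2 * \<nu>) * (q^2) ^ Suc k)"
  proof -
    have "complex_of_real q powr (2 * complex_of_real \<nu> + 2 * of_nat k + 2)
        = complex_of_real q powr complex_of_real (2 * \<nu> + 2 * real k + 2)"
      by (simp only: ex)
    also have "\<dots> = complex_of_real (q powr (2 * \<nu> + 2 * real k + 2))"
      using q0 by (intro powr_of_real) simp
    finally show ?thesis unfolding bk .
  qed
  have qi: "qpoch_inf (complex_of_real q powr (2 * complex_of_real \<nu> + 2 * of_nat k + 2)) (q^2)
     = complex_of_real (Pr (q^2) (q powr (2 * \<nu>) * (q^2) ^ Suc k))"
    unfolding pw by (rule Pr_complex[OF r_props b_props])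
  have qp: "qpoch (complex_of_real (q^2)) (q^2) k = complex_of_real (\<Prod>i<k. 1 - q^2 * (q^2) ^ i)"
    unfolding qpoch_def by simp
  show ?thesis unfolding qi qp cr_def bk by simp
qed

definition Gc :: "complex \<Rightarrow> complex" where
  "Gc w = (\<Sum>k. complex_of_real (cr q \<nu> k) * w ^ k)"

definition Gcd :: "complex \<Rightarrow> complex" where
  "Gcd w = (\<Sum>k. diffs (\<lambda>k. complex_of_real (cr q \<nu> k)) k * w ^ k)"

lemma C_nz: "qpoch_inf (complex_of_real (q^2)) (q^2) \<noteq> 0"
proof -
  have "0 \<le> q^2" "q^2 < 1" using r_props by auto
  hence "qpoch_inf (complex_of_real (q^2)) (q^2) = complex_of_real (Pr (q^2) (q^2))"
    "Pr (q^2) (q^2) \<noteq> 0"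
    using Pr_complex[OF r_props] Pr_nonzero[OF r_props] by blast+
  thus ?thesis by (simp del: of_real_power)
qed

lemma J_eq: "hahn_exton_J q (complex_of_real \<nu>) x =
   x powr (complex_of_real \<nu>) / qpoch_inf (complex_of_real (q^2)) (q^2) * Gc (x^2)"
  unfolding hahn_exton_J_def Gc_def coeff_complex[symmetric]
  by (simp add: power_mult)

lemma Gc_real: "Gc (complex_of_real x) = complex_of_real (Gr q \<nu> x)"
proof -
  have "(\<lambda>k. cr q \<nu> k * x ^ k) sums Gr q \<nu> x"
    unfolding Gr_def by (rule summable_sums[OF Gr_summable])
  hence "(\<lambda>k. complex_of_real (cr q \<nu> k * x ^ k)) sums complex_of_real (Gr q \<nu> x)"
    by (simp only: sums_of_real_iff)
  hence "(\<lambda>k. complex_of_real (cr q \<nu> k) * complex_of_real x ^ k) sums complex_of_real (Gr q \<nu> x)"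
    by simp
  thus ?thesis unfolding Gc_def by (metis sums_unique)
qed

lemma Gcd_real: "Gcd (complex_of_real x) = complex_of_real (Gd q \<nu> x)"
proof -
  have "(\<lambda>k. diffs (cr q \<nu>) k * x ^ k) sums Gd q \<nu> x"
    unfolding Gd_def by (rule summable_sums[OF termdiff_converges_all[OF Gr_summable]])
  hence "(\<lambda>k. complex_of_real (diffs (cr q \<nu>) k * x ^ k)) sums complex_of_real (Gd q \<nu> x)"
    by (simp only: sums_of_real_iff)
  hence "(\<lambda>k. diffs (\<lambda>k. complex_of_real (cr q \<nu> k)) k * complex_of_real x ^ k) sums complex_of_real (Gd q \<nu> x)"
    by (simp add: diffs_def)
  thus ?thesis unfolding Gcd_def by (metis sums_unique)
qed

lemma Gc_deriv: "(Gc has_field_derivative Gcd w) (at w)"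
  unfolding Gc_def[abs_def] Gcd_def
  by (rule termdiffs_strong_converges_everywhere[OF cr_summable])

lemma J_real: 
  assumes "a > 0"
  shows "hahn_exton_J q (complex_of_real \<nu>) (complex_of_real a) = 0 \<longleftrightarrow> Gr q \<nu> (a^2) = 0"
proof -
  have p: "complex_of_real a powr complex_of_real \<nu> \<noteq> 0" using assms by (simp add: powr_def)
  have g: "Gc ((complex_of_real a)^2) = complex_of_real (Gr q \<nu> (a^2))"
    using Gc_real[of "a^2"] by (simp only: of_real_power)
  show ?thesis unfolding J_eq g using C_nz p by simp
qed

lemma J_deriv:
  assumes "a > 0" "Gr q \<nu> (a^2) = 0"
  shows "deriv (hahn_exton_J q (complex_of_real \<nu>)) (complex_of_real a) \<noteq> 0"
proof -
  let ?s = "complex_of_real \<nu>" and ?C = "qpoch_inf (complex_of_real (q^2)) (q^2)"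
  let ?x = "complex_of_real a"
  have nr: "?x \<notin> \<real>\<^sub>\<le>\<^sub>0" using assms(1) by (simp add: complex_nonpos_Reals_iff)
  have d: "((\<lambda>x. x powr ?s / ?C * Gc (x^2)) has_field_derivative
      (?s * ?x powr (?s - 1) / ?C * Gc (?x^2) + ?x powr ?s / ?C * (Gcd (?x^2) * (2 * ?x)))) (at ?x)"
  proof -
    have d1: "((\<lambda>x. x powr ?s) has_field_derivative ?s * ?x powr (?s - 1)) (at ?x)"
      by (rule has_field_derivative_powr[OF nr])
    have d2: "((\<lambda>x. Gc (x^2)) has_field_derivative Gcd (?x^2) * (2 * ?x)) (at ?x)"
      by (rule DERIV_chain2[OF Gc_deriv]) (auto intro!: derivative_eq_intros)
    have "((\<lambda>x. x powr ?s / ?C * Gc (x^2)) has_field_derivative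
      (?s * ?x powr (?s - 1) / ?C * Gc (?x^2) + Gcd (?x^2) * (2 * ?x) * (?x powr ?s / ?C))) (at ?x)"
      by (rule DERIV_mult[OF DERIV_cdivide[OF d1] d2])
    thus ?thesis by (simp add: mult_ac)
  qed
  have g: "Gc (?x^2) = complex_of_real (Gr q \<nu> (a^2))"
    using Gc_real[of "a^2"] by (simp only: of_real_power)
  have g': "Gcd (?x^2) = complex_of_real (Gd q \<nu> (a^2))"
    using Gcd_real[of "a^2"] by (simp only: of_real_power)
  have "hahn_exton_J q ?s = (\<lambda>x. x powr ?s / ?C * Gc (x^2))" by (intro ext) (rule J_eq)
  hence "deriv (hahn_exton_J q ?s) ?x = ?s * ?x powr (?s - 1) / ?C * Gc (?x^2) + ?x powr ?s / ?C * (Gcd (?x^2) * (2 * ?x))"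
    using DERIV_imp_deriv[OF d] by simp
  also have "\<dots> = ?x powr ?s / ?C * (Gcd (?x^2) * (2 * ?x))"
    unfolding g using assms(2) by simp
  also have "\<dots> \<noteq> 0"
  proof -
    have "Gd q \<nu> (a^2) \<noteq> 0" using simple_zero assms(2) by blast
    hence "Gcd (?x^2) \<noteq> 0" unfolding g' by simp
    moreover have "?x powr ?s \<noteq> 0" using assms by (simp add: powr_def)
    ultimately show ?thesis using C_nz assms by simp
  qed
  finally show ?thesis .
qed

end

theorem theorem3p4:
  fixes q \<nu> :: real
  assumes "0 < q" "q < 1" "\<nu> > -1"
  shows "countable {a::real. a > 0 \<and> hahn_exton_J q (of_real \<nu>) (of_real a) = 0}
       \<and> infinite {a::real. a > 0 \<and> hahn_exton_J q (of_real \<nu>) (of_real a) = 0}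
       \<and> (\<forall>a::real. a > 0 \<and> hahn_exton_J q (of_real \<nu>) (of_real a) = 0 \<longrightarrow>
            deriv (hahn_exton_J q (of_real \<nu>)) (of_real a) \<noteq> 0)"
proof -
  let ?S = "{a::real. a > 0 \<and> hahn_exton_J q (of_real \<nu>) (of_real a) = 0}"
  have S: "?S = {a. a > 0 \<and> Gr q \<nu> (a^2) = 0}"
    using J_real[OF assms] by auto
  have c: "countable ?S"
  proof (rule countable_image_inj_on)
    have "(\<lambda>a. a^2) ` ?S \<subseteq> {w. Gr q \<nu> w = 0}" unfolding S by auto
    thus "countable ((\<lambda>a. a^2) ` ?S)"
      using Gr_zeros_countable[OF assms] countable_subset by blast
    show "inj_on (\<lambda>a::real. a^2) ?S"
      by (rule inj_onI) (auto simp: power2_eq_iff_nonneg)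
  qed
  have i: "infinite ?S"
  proof
    assume fin: "finite ?S"
    define M where "M = Max (insert 0 ?S)"
    have M: "\<And>a. a \<in> ?S \<Longrightarrow> a \<le> M" "0 \<le> M"
      unfolding M_def using fin by auto
    obtain w where w: "w > M^2" "Gr q \<nu> w = 0" using zeros_unbounded[OF assms] by blast
    have w0: "w > 0" using w(1) by (smt (verit) zero_le_power2)
    define a where "a = sqrt w"
    have a: "a > 0" "a^2 = w" unfolding a_def using w0 by auto
    have "a \<in> ?S" unfolding S using a w by simp
    hence "a \<le> M" by (rule M)
    hence "a^2 \<le> M^2" using a by (intro power_mono) auto
    thus False using a w by simp
  qed
  have d: "\<forall>a::real. a > 0 \<and> hahn_exton_J q (of_real \<nu>) (of_real a) = 0 \<longrightarrow>
            deriv (hahn_exton_J q (of_real \<nu>)) (of_real a) \<noteq> 0"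
    using J_real[OF assms] J_deriv[OF assms] by blast
  show ?thesis using c i d by blast
qed

end
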